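(* For every integer $m \geq 3$, $m \leq \gamma_{b,2}(P_m \square C_5) \leq m+1$.
   Context: For a graph $G$, a $2$-limited broadcast is a function $f: V(G) \to \{0,1,2\}$. A vertex $u$ hears the broadcast from $v$ if $f(v) > 0$ and $d(u,v) \leq f(v)$, where $d$ is the distance in $G$. The broadcast $f$ is dominating if every vertex of $G$ hears the broadcast from some vertex. The cost of $f$ is $\sum_{v \in V(G)} f(v)$. The $2$-limited broadcast domination number $\gamma_{b,2}(G)$ is the minimum cost of a $2$-limited dominating broadcast on $G$. $C_5$ denotes the cycle on $5$ vertices, $P_m$ the path on $m$ vertices, and $\square$ the Cartesian product of graphs. *)

theory Defs
  imports Main
begin

definition is_walk :: "'a set \<Rightarrow> ('a \<Rightarrow> 'a \<Rightarrow> bool) \<Rightarrow> 'a list \<Rightarrow> bool" where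
  "is_walk V E xs \<longleftrightarrow> xs \<noteq> [] \<and> set xs \<subseteq> V \<and>
     (\<forall>i. Suc i < length xs \<longrightarrow> E (xs ! i) (xs ! Suc i))"

definition gdist :: "'a set \<Rightarrow> ('a \<Rightarrow> 'a \<Rightarrow> bool) \<Rightarrow> 'a \<Rightarrow> 'a \<Rightarrow> nat" where
  "gdist V E u v = (LEAST n. \<exists>xs. is_walk V E xs \<and> hd xs = u \<and> last xs = v \<and> length xs = Suc n)"

definition two_limited_broadcast :: "'a set \<Rightarrow> ('a \<Rightarrow> nat) \<Rightarrow> bool" where
  "two_limited_broadcast V f \<longleftrightarrow> (\<forall>v\<in>V. f v \<le> 2)"

definition hears :: "'a set \<Rightarrow> ('a \<Rightarrow> 'a \<Rightarrow> bool) \<Rightarrow> ('a \<Rightarrow> nat) \<Rightarrow> 'a \<Rightarrow> 'a \<Rightarrow> bool" where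
  "hears V E f u v \<longleftrightarrow> f v > 0 \<and> gdist V E u v \<le> f v"

definition dominating_broadcast :: "'a set \<Rightarrow> ('a \<Rightarrow> 'a \<Rightarrow> bool) \<Rightarrow> ('a \<Rightarrow> nat) \<Rightarrow> bool" where
  "dominating_broadcast V E f \<longleftrightarrow> (\<forall>u\<in>V. \<exists>v\<in>V. hears V E f u v)"

definition broadcast_cost :: "'a set \<Rightarrow> ('a \<Rightarrow> nat) \<Rightarrow> nat" where
  "broadcast_cost V f = (\<Sum>v\<in>V. f v)"

definition gamma_b2 :: "'a set \<Rightarrow> ('a \<Rightarrow> 'a \<Rightarrow> bool) \<Rightarrow> nat" where
  "gamma_b2 V E = (LEAST c. \<exists>f. two_limited_broadcast V f \<and> dominating_broadcast V E f
                              \<and> broadcast_cost V f = c)"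

definition path_V :: "nat \<Rightarrow> nat set" where "path_V m = {0..<m}"
definition path_E :: "nat \<Rightarrow> nat \<Rightarrow> bool" where "path_E i j \<longleftrightarrow> i = Suc j \<or> j = Suc i"

definition cycle_V :: "nat \<Rightarrow> nat set" where "cycle_V n = {0..<n}"
definition cycle_E :: "nat \<Rightarrow> nat \<Rightarrow> nat \<Rightarrow> bool" where
  "cycle_E n i j \<longleftrightarrow> i \<noteq> j \<and> (j = Suc i mod n \<or> i = Suc j mod n)"

definition cprod_V :: "'a set \<Rightarrow> 'b set \<Rightarrow> ('a \<times> 'b) set" where
  "cprod_V V1 V2 = V1 \<times> V2"
definition cprod_E :: "('a \<Rightarrow> 'a \<Rightarrow> bool) \<Rightarrow> ('b \<Rightarrow> 'b \<Rightarrow> bool) \<Rightarrow> 'a \<times> 'b \<Rightarrow> 'a \<times> 'b \<Rightarrow> bool" where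
  "cprod_E E1 E2 p q \<longleftrightarrow> (fst p = fst q \<and> E2 (snd p) (snd q)) \<or> (snd p = snd q \<and> E1 (fst p) (fst q))"

end

theory Submission
  imports Defs
begin

definition lo :: "(nat \<Rightarrow> nat) \<Rightarrow> nat \<Rightarrow> nat \<Rightarrow> nat" where
  "lo a c k = (if k \<le> c then a (c - k) else 0)"

definition KK :: "(nat \<Rightarrow> nat) \<Rightarrow> (nat \<Rightarrow> nat) \<Rightarrow> nat \<Rightarrow> nat" where
  "KK a b c = 5 * a c + 3 * (b c + lo a c 1 + a (c+1)) + lo b c 1 + b (c+1) + lo a c 2 + a (c+2)"

definition rvalid :: "nat \<Rightarrow> (nat \<Rightarrow> nat) \<Rightarrow> (nat \<Rightarrow> nat) \<Rightarrow> bool" where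
  "rvalid M a b \<longleftrightarrow> (\<forall>c\<ge>M. a c = 0 \<and> b c = 0) \<and> (\<forall>c<M. 5 \<le> KK a b c)"

lemma sum_split_shift:
  fixes g :: "nat \<Rightarrow> nat"
  assumes "p \<le> M"
  shows "(\<Sum>c<M. g c) = (\<Sum>c<p. g c) + (\<Sum>c<M-p. g (c+p))"
proof -
  have e: "{..<M} = {..<p} \<union> {p..<M}" using assms by auto
  have "(\<Sum>c<M. g c) = sum g ({..<p} \<union> {p..<M})" by (simp only: e)
  also have "\<dots> = (\<Sum>c<p. g c) + (\<Sum>c\<in>{p..<M}. g c)"
    by (rule sum.union_disjoint) auto
  finally have "(\<Sum>c<M. g c) = (\<Sum>c<p. g c) + (\<Sum>c\<in>{p..<M}. g c)" .
  moreover have "(\<Sum>c\<in>{p..<M}. g c) = (\<Sum>c<M-p. g (c+p))"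
    using sum.shift_bounds_nat_ivl[of g 0 p "M-p"] assms by (simp add: atLeast0LessThan)
  ultimately show ?thesis by simp
qed

lemma peel:
  assumes V: "rvalid M a b" and p: "0 < p" "p \<le> M"
    and IH: "\<And>a b. rvalid (M-p) a b \<Longrightarrow> M - p \<le> (\<Sum>c<M-p. 2 * a c + b c)"
    and k0: "p < M \<Longrightarrow> 5 \<le> 5 * a p + 3 * (b p + d + a (p+1)) + b (p+1) + a (p+2)"
    and k1: "p+1 < M \<Longrightarrow> 5 \<le> 5 * a (p+1) + 3 * (b (p+1) + a p + a (p+2)) + b p + d + b (p+2) + a (p+3)"
    and cost: "p + d \<le> (\<Sum>c<p. 2 * a c + b c)"
  shows "M \<le> (\<Sum>c<M. 2 * a c + b c)"
proof -
  define a' where "a' = (\<lambda>c. a (c+p))"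
  define b' where "b' = (\<lambda>c. b (c+p) + (if c = 0 \<and> p < M then d else 0))"
  have supp: "\<forall>c\<ge>M. a c = 0 \<and> b c = 0" and KV: "\<forall>c<M. 5 \<le> KK a b c"
    using V by (auto simp: rvalid_def)
  have "rvalid (M-p) a' b'"
    unfolding rvalid_def
  proof (intro conjI)
    show "\<forall>c\<ge>M - p. a' c = 0 \<and> b' c = 0"
    proof (intro allI impI)
    fix c assume "M - p \<le> c"
    hence "M \<le> c + p" by linarith
    moreover have "\<not> (c = 0 \<and> p < M)" using \<open>M - p \<le> c\<close> by linarith
    ultimately show "a' c = 0 \<and> b' c = 0" using supp[rule_format, of "c+p"] by (simp add: a'_def b'_def)
    qed
  next
    show "\<forall>c<M - p. 5 \<le> KK a' b' c"
    proof (intro allI impI)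
    fix c assume c: "c < M - p"
    consider "c = 0" | "c = 1" | "c \<ge> 2" by linarith
    thus "5 \<le> KK a' b' c"
    proof cases
      case 1
      have pm: "p < M" using 1 c by linarith
      have "KK a' b' c = 5 * a p + 3 * (b p + d + a (p+1)) + b (p+1) + a (p+2)"
        using 1 pm by (simp add: KK_def lo_def a'_def b'_def algebra_simps)
      thus ?thesis using k0 pm by linarith
    next
      case 2
      have pm: "p+1 < M" "p < M" using 2 c by linarith+
      have a3: "a (p+3) = a (Suc (Suc (Suc p)))" by (simp only: numeral_3_eq_3 add_Suc_right add_0_right)
      have "KK a' b' c = 5 * a (p+1) + 3 * (b (p+1) + a p + a (p+2)) + b p + d + b (p+2) + a (p+3)"
        using 2 pm a3 by (simp add: KK_def lo_def a'_def b'_def algebra_simps)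
      thus ?thesis using k1 pm by linarith
    next
      case 3
      have "5 \<le> KK a b (c+p)" using KV c by auto
      moreover have "KK a b (c+p) \<le> KK a' b' c"
        using 3 p by (simp add: KK_def lo_def a'_def b'_def algebra_simps)
      ultimately show ?thesis by linarith
    qed
  qed
  qed
  hence "M - p \<le> (\<Sum>c<M-p. 2 * a' c + b' c)" by (rule IH)
  also have "(\<Sum>c<M-p. 2 * a' c + b' c) \<le> (\<Sum>c<M-p. 2 * a (c+p) + b (c+p)) + d"
  proof -
    have e1: "(\<Sum>c<M-p. 2 * a' c + b' c) = (\<Sum>c<M-p. (2 * a (c+p) + b (c+p)) + (if c = 0 then d else 0))"
      using p by (intro sum.cong) (auto simp: a'_def b'_def)
    have e2: "(\<Sum>c<M-p. (2 * a (c+p) + b (c+p)) + (if c = 0 then d else 0)) = (\<Sum>c<M-p. 2 * a (c+p) + b (c+p)) + (\<Sum>c<M-p. (if c = 0 then d else 0))"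
      by (simp add: sum.distrib)
    have e3: "(\<Sum>c<M-p. (if c = 0 then d else (0::nat))) \<le> d"
      by (simp add: sum.delta)
    show ?thesis using e1 e2 e3 by linarith
  qed
  finally have "M - p \<le> (\<Sum>c<M-p. 2 * a (c+p) + b (c+p)) + d" .
  moreover have "(\<Sum>c<M. 2 * a c + b c) = (\<Sum>c<p. 2 * a c + b c) + (\<Sum>c<M-p. 2 * a (c+p) + b (c+p))"
    using sum_split_shift[OF p(2)] .
  ultimately show ?thesis using cost p by linarith
qed

lemma relaxed: "rvalid M a b \<Longrightarrow> M \<le> (\<Sum>c<M. 2 * a c + b c)"
proof (induction M arbitrary: a b rule: less_induct)
  case (less M a b)
  show ?case
  proof (cases "M = 0")
    case True thus ?thesis by simp
  next
    case False
    have supp: "\<And>c. M \<le> c \<Longrightarrow> a c = 0 \<and> b c = 0" and KV: "\<And>c. c < M \<Longrightarrow> 5 \<le> KK a b c"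
      using less.prems by (auto simp: rvalid_def)
    have nz: "\<And>c. 0 < a c \<Longrightarrow> c < M" "\<And>c. 0 < b c \<Longrightarrow> c < M"
      using supp by (metis not_less less_irrefl)+
    have P: "M \<le> (\<Sum>c<M. 2 * a c + b c)"
      if "0 < p" "p \<le> M"
        "p < M \<Longrightarrow> 5 \<le> 5 * a p + 3 * (b p + d + a (p+1)) + b (p+1) + a (p+2)"
        "p+1 < M \<Longrightarrow> 5 \<le> 5 * a (p+1) + 3 * (b (p+1) + a p + a (p+2)) + b p + d + b (p+2) + a (p+3)"
        "p + d \<le> (\<Sum>c<p. 2 * a c + b c)" for p d
    proof (rule peel[OF less.prems that(1,2) _ that(3,4,5)])
      fix a' b' assume "rvalid (M - p) a' b'"
      thus "M - p \<le> (\<Sum>c<M - p. 2 * a' c + b' c)" using less.IH[of "M-p"] that False by simp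
    qed
    have K0: "5 \<le> 5*a 0 + 3*(b 0 + a 1) + b 1 + a 2" using KV[of 0] False by (simp add: KK_def lo_def numeral_2_eq_2)
    have K1: "1 < M \<Longrightarrow> 5 \<le> 5*a 1 + 3*(b 1 + a 0 + a 2) + b 0 + b 2 + a 3"
      using KV[of 1] by (simp add: KK_def lo_def eval_nat_numeral)
    have K2: "2 < M \<Longrightarrow> 5 \<le> 5*a 2 + 3*(b 2 + a 1 + a 3) + b 1 + b 3 + a 0 + a 4"
      using KV[of 2] by (simp add: KK_def lo_def eval_nat_numeral)
    have K3: "3 < M \<Longrightarrow> 5 \<le> 5*a 3 + 3*(b 3 + a 2 + a 4) + b 2 + b 4 + a 1 + a 5"
      using KV[of 3] by (simp add: KK_def lo_def eval_nat_numeral)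
    have K4: "4 < M \<Longrightarrow> 5 \<le> 5*a 4 + 3*(b 4 + a 3 + a 5) + b 3 + b 5 + a 2 + a 6"
      using KV[of 4] by (simp add: KK_def lo_def eval_nat_numeral)
    have s1: "(\<Sum>c<1. 2 * a c + b c) = 2 * a 0 + b 0" by simp
    have s2: "(\<Sum>c<2. 2 * a c + b c) = 2 * a 0 + b 0 + 2 * a 1 + b 1" by (simp add: numeral_2_eq_2)
    have s3: "(\<Sum>c<3. 2 * a c + b c) = 2 * a 0 + b 0 + 2 * a 1 + b 1 + 2 * a 2 + b 2"
      by (simp add: eval_nat_numeral)
    have n1: "1 < M \<Longrightarrow> 1 \<le> M" "2 < M \<Longrightarrow> 2 \<le> M" by auto
    consider (A1) "a 0 \<ge> 1" | (A2) "a 0 = 0" "b 0 \<ge> 2" | (B) "a 0 = 0" "b 0 = 1" | (C) "a 0 = 0" "b 0 = 0"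
      by linarith
    then show ?thesis
    proof cases
      case A1
      show ?thesis
        by (rule P[of 1 "a 0 + b 0"]) (use A1 K1 K2 False in \<open>simp_all add: s1 eval_nat_numeral\<close>)
    next
      case A2
      show ?thesis
        by (rule P[of 1 "b 0 - 1"]) (use A2 K1 K2 False in \<open>simp_all add: s1 eval_nat_numeral\<close>)
    next
      case B
      hence K0': "2 \<le> 3 * a 1 + b 1 + a 2" using K0 by simp
      consider (B1) "a 1 \<ge> 1" | (B2) "a 1 = 0" "b 1 \<ge> 2" | (B3) "a 1 = 0" "b 1 = 1" "a 2 \<ge> 1"
        | (B4) "a 1 = 0" "b 1 = 0" "a 2 \<ge> 2" using K0' by linarith
      then show ?thesis
      proof cases
        case B1
        have "1 < M" using nz B1 by auto
        show ?thesis
          by (rule P[of 2 "a 1 + b 1"]) (use B B1 K2 K3 \<open>1 < M\<close> in \<open>simp_all add: s2 eval_nat_numeral\<close>)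
      next
        case B2
        have "1 < M" using nz B2 by auto
        show ?thesis
          by (rule P[of 2 "b 1 - 1"]) (use B B2 K2 K3 \<open>1 < M\<close> in \<open>simp_all add: s2 eval_nat_numeral\<close>)
      next
        case B3
        have "1 < M" using nz B3 by auto
        show ?thesis
          by (rule P[of 2 "0"]) (use B B3 K2 K3 \<open>1 < M\<close> in \<open>simp_all add: s2 eval_nat_numeral\<close>)
      next
        case B4
        show ?thesis
          by (rule P[of 1 "0"]) (use B B4 K1 K2 False in \<open>simp_all add: s1 eval_nat_numeral\<close>)
      qed
    next
      case C
      hence K0': "5 \<le> 3 * a 1 + b 1 + a 2" using K0 by simp
      consider (C1) "a 1 \<ge> 2" | (C2a) "a 1 = 1" "a 2 \<ge> 2" | (C2b) "a 1 = 1" "a 2 = 1" "b 1 \<ge> 1"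
        | (C2c) "a 1 = 1" "a 2 = 0" "b 1 \<ge> 2" | (C3i) "a 1 = 0" "a 2 \<ge> 1" "b 1 \<ge> 2"
        | (C3ii) "a 1 = 0" "b 1 \<le> 1" "a 2 \<ge> 4" | (C3iii) "a 1 = 0" "a 2 = 0" "b 1 \<ge> 5"
        using K0' by linarith
      then show ?thesis
      proof cases
        case C1
        have "1 < M" using nz C1 by auto
        show ?thesis
          by (rule P[of 2 "a 1 + b 1"]) (use C C1 K2 K3 \<open>1 < M\<close> in \<open>simp_all add: s2 eval_nat_numeral\<close>)
      next
        case C2a
        have "1 < M" using nz C2a by auto
        show ?thesis
          by (rule P[of 2 "0"]) (use C C2a K2 K3 \<open>1 < M\<close> in \<open>simp_all add: s2 eval_nat_numeral\<close>)
      next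
        case C2b
        have "1 < M" using nz C2b by auto
        show ?thesis
          by (rule P[of 2 "1"]) (use C C2b K2 K3 \<open>1 < M\<close> in \<open>simp_all add: s2 eval_nat_numeral\<close>)
      next
        case C2c
        have "1 < M" using nz C2c by auto
        show ?thesis
          by (rule P[of 2 "b 1"]) (use C C2c K2 K3 \<open>1 < M\<close> in \<open>simp_all add: s2 eval_nat_numeral\<close>)
      next
        case C3i
        have "1 < M" using nz C3i by auto
        show ?thesis
          by (rule P[of 2 "0"]) (use C C3i K2 K3 \<open>1 < M\<close> in \<open>simp_all add: s2 eval_nat_numeral\<close>)
      next
        case C3ii
        have "2 < M" using nz C3ii by auto
        show ?thesis
          by (rule P[of 3 "a 2 + b 2"]) (use C C3ii K3 K4 \<open>2 < M\<close> in \<open>simp_all add: s3 eval_nat_numeral\<close>)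
      next
        case C3iii
        have "1 < M" using nz C3iii by auto
        show ?thesis
          by (rule P[of 2 "b 1 - 2"]) (use C C3iii K2 K3 \<open>1 < M\<close> in \<open>simp_all add: s2 eval_nat_numeral\<close>)
      qed
    qed
  qed
qed

definition cd :: "nat \<Rightarrow> nat \<Rightarrow> nat" where
  "cd j k = min (if j \<le> k then k - j else j - k) (5 - (if j \<le> k then k - j else j - k))"

definition ndist :: "nat \<Rightarrow> nat \<Rightarrow> nat" where
  "ndist i i' = (if i \<le> i' then i' - i else i - i')"

definition DD :: "nat \<times> nat \<Rightarrow> nat \<times> nat \<Rightarrow> nat" where
  "DD p q = ndist (fst p) (fst q) + cd (snd p) (snd q)"

lemma less5: "(j::nat) < 5 \<Longrightarrow> j = 0 \<or> j = 1 \<or> j = 2 \<or> j = 3 \<or> j = 4" by auto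

lemma cd_tri: "j < 5 \<Longrightarrow> k < 5 \<Longrightarrow> l < 5 \<Longrightarrow> cd j l \<le> cd j k + cd k l"
  by (auto dest!: less5 simp: cd_def)

lemma cd_adj: "j < 5 \<Longrightarrow> k < 5 \<Longrightarrow> cycle_E 5 j k \<Longrightarrow> cd j k \<le> 1"
  by (auto dest!: less5 simp: cd_def cycle_E_def)

lemma cd_le2: "j < 5 \<Longrightarrow> k < 5 \<Longrightarrow> cd j k \<le> 2"
  by (auto dest!: less5 simp: cd_def)

lemma cd_zero: "j < 5 \<Longrightarrow> k < 5 \<Longrightarrow> cd j k = 0 \<Longrightarrow> j = k"
  by (auto dest!: less5 simp: cd_def)

lemma cd_step: "j < 5 \<Longrightarrow> k < 5 \<Longrightarrow> j \<noteq> k \<Longrightarrow>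
   cd ((j+1) mod 5) k + 1 = cd j k \<or> cd ((j+4) mod 5) k + 1 = cd j k"
  by (auto dest!: less5 simp: cd_def)

lemma cyc_nb: "j < 5 \<Longrightarrow> cycle_E 5 j ((j+1) mod 5) \<and> cycle_E 5 j ((j+4) mod 5)"
  by (auto dest!: less5 simp: cycle_E_def)

lemma cd_cover02: "j < 5 \<Longrightarrow> cd j 0 \<le> 1 \<or> cd j 2 \<le> 1"
  by (auto dest!: less5 simp: cd_def)

lemma cd_cover24: "j < 5 \<Longrightarrow> cd j 2 \<le> 1 \<or> cd j 4 \<le> 1"
  by (auto dest!: less5 simp: cd_def)

lemma card_filter5: "card {j. j < (5::nat) \<and> P j} = length (filter P [0,1,2,3,4])"
proof -
  have "{j. j < (5::nat) \<and> P j} = set (filter P [0,1,2,3,4])" by (auto dest!: less5)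
  moreover have "card (set (filter P [0,1,2,3,4])) = length (filter P [0,1,2,3,4::nat])"
    by (rule distinct_card) simp
  ultimately show ?thesis by simp
qed

definition WW :: "nat \<Rightarrow> nat \<Rightarrow> nat" where
  "WW x n = (if x = 2 then (if n = 0 then 5 else if n = 1 then 3 else if n = 2 then 1 else 0)
            else if x = 1 then (if n = 0 then 3 else if n = 1 then 1 else 0) else 0)"

lemma card_ball: "k < 5 \<Longrightarrow> x \<le> 2 \<Longrightarrow> card {j. j < (5::nat) \<and> 0 < x \<and> n + cd j k \<le> x} \<le> WW x n"
proof -
  assume k: "k < 5" and x: "x \<le> 2"
  show ?thesis
  proof (cases "n \<le> 2")
    case False
    have "\<And>j. \<not> (n + cd j k \<le> x)" using x False by linarith
    hence e: "{j. j < (5::nat) \<and> 0 < x \<and> n + cd j k \<le> x} = {}" by blast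
    show ?thesis unfolding e by simp
  next
    case True
    hence "n = 0 \<or> n = 1 \<or> n = 2" by auto
    moreover have "x = 0 \<or> x = 1 \<or> x = 2" using x by auto
    moreover have "card {j. j < (5::nat) \<and> 0 < x \<and> n + cd j k \<le> x}
       = length (filter (\<lambda>j. 0 < x \<and> n + cd j k \<le> x) [0,1,2,3,4])" by (rule card_filter5)
    ultimately show ?thesis using less5[OF k]
      by (elim disjE) (simp_all add: cd_def WW_def)
  qed
qed

abbreviation VV :: "nat \<Rightarrow> (nat \<times> nat) set" where
  "VV m \<equiv> cprod_V (path_V m) (cycle_V 5)"
abbreviation EE :: "nat \<times> nat \<Rightarrow> nat \<times> nat \<Rightarrow> bool" where
  "EE \<equiv> cprod_E path_E (cycle_E 5)"

lemma VV_mem: "p \<in> VV m \<longleftrightarrow> fst p < m \<and> snd p < 5"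
  by (cases p) (auto simp: cprod_V_def path_V_def cycle_V_def)

lemma cd_self: "cd j j = 0" by (simp add: cd_def)

lemma DD_adj: "p \<in> VV m \<Longrightarrow> q \<in> VV m \<Longrightarrow> EE p q \<Longrightarrow> DD p q \<le> 1"
  using cd_adj[of "snd p" "snd q"]
  by (auto simp: VV_mem cprod_E_def DD_def ndist_def cd_self path_E_def)

lemma DD_tri: "p \<in> VV m \<Longrightarrow> q \<in> VV m \<Longrightarrow> r \<in> VV m \<Longrightarrow> DD p r \<le> DD p q + DD q r"
  using cd_tri[of "snd p" "snd q" "snd r"]
  by (auto simp: VV_mem DD_def ndist_def)

lemma walk_ConsD: "is_walk V E (x # y # ys) \<Longrightarrow> is_walk V E (y # ys) \<and> E x y"
proof -
  assume w: "is_walk V E (x # y # ys)"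
  have "E x y" using w unfolding is_walk_def by (metis Suc_less_eq length_Cons nth_Cons_0 nth_Cons_Suc zero_less_Suc)
  moreover have "is_walk V E (y # ys)"
    unfolding is_walk_def
  proof (intro conjI allI impI)
    show "y # ys \<noteq> []" by simp
    show "set (y # ys) \<subseteq> V" using w by (auto simp: is_walk_def)
    fix i assume "Suc i < length (y # ys)"
    hence "Suc (Suc i) < length (x # y # ys)" by simp
    hence "E ((x # y # ys) ! Suc i) ((x # y # ys) ! Suc (Suc i))" using w unfolding is_walk_def by blast
    thus "E ((y # ys) ! i) ((y # ys) ! Suc i)" by simp
  qed
  ultimately show ?thesis by simp
qed

lemma walk_Cons: "is_walk V E ys \<Longrightarrow> x \<in> V \<Longrightarrow> E x (hd ys) \<Longrightarrow> is_walk V E (x # ys)"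
  unfolding is_walk_def
proof (intro conjI allI impI)
  assume a: "ys \<noteq> [] \<and> set ys \<subseteq> V \<and> (\<forall>i. Suc i < length ys \<longrightarrow> E (ys ! i) (ys ! Suc i))"
    and x: "x \<in> V" and e: "E x (hd ys)"
  show "x # ys \<noteq> []" by simp
  show "set (x # ys) \<subseteq> V" using a x by simp
  fix i assume i: "Suc i < length (x # ys)"
  show "E ((x # ys) ! i) ((x # ys) ! Suc i)"
  proof (cases i)
    case 0 thus ?thesis using e a by (simp add: hd_conv_nth)
  next
    case (Suc i') thus ?thesis using a i by simp
  qed
qed

lemma walk_DD: "is_walk (VV m) EE xs \<Longrightarrow> DD (hd xs) (last xs) \<le> length xs - 1"
proof (induction xs)
  case Nil thus ?case by (simp add: is_walk_def)
next
  case (Cons x xs)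
  show ?case
  proof (cases xs)
    case Nil thus ?thesis by (simp add: DD_def ndist_def cd_self)
  next
    case (Cons y ys)
    have wd: "is_walk (VV m) EE (y # ys) \<and> EE x y"
      using walk_ConsD[of "VV m" EE x y ys] Cons.prems unfolding Cons by blast
    hence w: "is_walk (VV m) EE xs" and e: "EE x y" using Cons by simp_all
    have xV: "x \<in> VV m" using Cons.prems by (simp add: is_walk_def)
    have yV: "y \<in> VV m" using w Cons by (simp add: is_walk_def)
    have lV: "last xs \<in> VV m" using w unfolding is_walk_def using last_in_set by blast
    have t: "DD x (last xs) \<le> DD x y + DD y (last xs)" using DD_tri[OF xV yV lV] .
    have d1: "DD x y \<le> 1" using DD_adj[OF xV yV e] .
    have ih: "DD y (last xs) \<le> length xs - 1" using Cons.IH[OF w] Cons by simp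
    have hl: "hd (x # xs) = x" "last (x # xs) = last xs" "hd xs = y" "length (x # xs) - 1 = length xs"
      using Cons by simp_all
    have "length xs \<ge> 1" using Cons by simp
    thus ?thesis unfolding hl using t d1 ih by linarith
  qed
qed

lemma DD_step:
  assumes p: "p \<in> VV m" and q: "q \<in> VV m" and ne: "p \<noteq> q"
  shows "\<exists>w\<in>VV m. EE p w \<and> DD w q + 1 = DD p q"
proof -
  obtain i j where pij: "p = (i, j)" by (cases p)
  obtain i' j' where qij: "q = (i', j')" by (cases q)
  have ij: "i < m" "j < 5" "i' < m" "j' < 5" using p q pij qij by (auto simp: VV_mem)
  consider "i < i'" | "i' < i" | "i = i'" by linarith
  thus ?thesis
  proof cases
    case 1
    have a: "(i+1, j) \<in> VV m" using 1 ij by (simp add: VV_mem)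
    have b: "EE p (i+1, j)" by (simp add: pij cprod_E_def path_E_def)
    have c: "DD (i+1, j) q + 1 = DD p q" using 1 by (simp add: pij qij DD_def ndist_def)
    show ?thesis using a b c by blast
  next
    case 2
    have a: "(i-1, j) \<in> VV m" using 2 ij by (simp add: VV_mem)
    have b: "EE p (i-1, j)" using 2 by (simp add: pij cprod_E_def path_E_def)
    have c: "DD (i-1, j) q + 1 = DD p q" using 2 by (auto simp add: pij qij DD_def ndist_def)
    show ?thesis using a b c by blast
  next
    case 3
    hence jj: "j \<noteq> j'" using ne pij qij by simp
    have gen: "\<exists>w\<in>VV m. EE p w \<and> DD w q + 1 = DD p q"
      if h1: "cd j'' j' + 1 = cd j j'" and h2: "cycle_E 5 j j''" and h3: "j'' < 5" for j''
    proof -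
      have a: "(i, j'') \<in> VV m" using ij h3 by (simp add: VV_mem)
      have b: "EE p (i, j'')" using h2 by (simp add: pij cprod_E_def)
      have c: "DD (i, j'') q + 1 = DD p q" using 3 h1 by (simp add: pij qij DD_def ndist_def)
      show ?thesis using a b c by blast
    qed
    have m1: "(j+1) mod 5 < 5" "(j+4) mod 5 < 5" by simp_all
    from cd_step[OF ij(2) ij(4) jj] cyc_nb[OF ij(2)] gen m1 show ?thesis by blast
  qed
qed

lemma DD_zero: "p \<in> VV m \<Longrightarrow> q \<in> VV m \<Longrightarrow> DD p q = 0 \<Longrightarrow> p = q"
  using cd_zero[of "snd p" "snd q"]
  by (cases p, cases q) (auto simp: VV_mem DD_def ndist_def split: if_splits)

lemma walk_ex:
  "p \<in> VV m \<Longrightarrow> q \<in> VV m \<Longrightarrow> \<exists>xs. is_walk (VV m) EE xs \<and> hd xs = p \<and> last xs = q \<and> length xs = Suc (DD p q)"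
proof (induction "DD p q" arbitrary: p)
  case 0
  hence "p = q" using DD_zero by metis
  thus ?case using 0 by (intro exI[of _ "[p]"]) (auto simp: is_walk_def)
next
  case (Suc n)
  have "p \<noteq> q" using Suc.hyps(2) by (auto simp: DD_def ndist_def cd_self)
  then obtain w where w: "w \<in> VV m" "EE p w" "DD w q + 1 = DD p q" using DD_step Suc.prems by blast
  hence "n = DD w q" using Suc.hyps(2) by simp
  then obtain xs where xs: "is_walk (VV m) EE xs" "hd xs = w" "last xs = q" "length xs = Suc (DD w q)"
    using Suc.hyps(1) w(1) Suc.prems(2) by blast
  have "is_walk (VV m) EE (p # xs)" using walk_Cons[OF xs(1) Suc.prems(1)] xs(2) w(2) by simp
  moreover have "xs \<noteq> []" using xs(1) by (simp add: is_walk_def)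
  ultimately show ?case using xs w Suc.hyps(2) by (intro exI[of _ "p # xs"]) auto
qed

lemma gdist_eq: "p \<in> VV m \<Longrightarrow> q \<in> VV m \<Longrightarrow> gdist (VV m) EE p q = DD p q"
  unfolding gdist_def
proof (rule Least_equality)
  assume "p \<in> VV m" "q \<in> VV m"
  thus "\<exists>xs. is_walk (VV m) EE xs \<and> hd xs = p \<and> last xs = q \<and> length xs = Suc (DD p q)"
    by (rule walk_ex)
next
  fix n assume "\<exists>xs. is_walk (VV m) EE xs \<and> hd xs = p \<and> last xs = q \<and> length xs = Suc n"
  then obtain xs where "is_walk (VV m) EE xs" "hd xs = p" "last xs = q" "length xs = Suc n" by blast
  thus "DD p q \<le> n" using walk_DD by fastforce
qed

lemma sum_prod5:
  fixes g :: "nat \<times> nat \<Rightarrow> nat"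
  shows "(\<Sum>v\<in>VV m. g v) = (\<Sum>d<m. \<Sum>k<5. g (d, k))"
proof -
  have "VV m = {0..<m} \<times> {0..<5}" by (simp add: cprod_V_def path_V_def cycle_V_def)
  hence "(\<Sum>v\<in>VV m. g v) = (\<Sum>v\<in>{0..<m} \<times> {0..<5}. g v)" by simp
  also have "\<dots> = (\<Sum>d\<in>{0..<m}. \<Sum>k\<in>{0..<5}. g (d, k))"
    by (simp add: sum.cartesian_product)
  finally show ?thesis by (simp add: atLeast0LessThan)
qed

lemma lower:
  assumes tl: "two_limited_broadcast (VV m) f" and dom: "dominating_broadcast (VV m) EE f"
  shows "m \<le> broadcast_cost (VV m) f"
proof -
  define a where "a c = (if c < m then (\<Sum>k<5. if f (c,k) = 2 then 1 else 0) else (0::nat))" for c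
  define b where "b c = (if c < m then (\<Sum>k<5. if f (c,k) = 1 then 1 else 0) else (0::nat))" for c
  have fle: "\<And>d k. d < m \<Longrightarrow> k < 5 \<Longrightarrow> f (d,k) \<le> 2"
    using tl by (auto simp: two_limited_broadcast_def VV_mem)
  have cost: "broadcast_cost (VV m) f = (\<Sum>c<m. 2 * a c + b c)"
  proof -
    have "broadcast_cost (VV m) f = (\<Sum>d<m. \<Sum>k<5. f (d, k))"
      unfolding broadcast_cost_def by (rule sum_prod5)
    also have "\<dots> = (\<Sum>c<m. 2 * a c + b c)"
    proof (rule sum.cong)
      fix d assume d: "d \<in> {..<m}"
      have "(\<Sum>k<5. f (d, k)) = (\<Sum>k<5. 2 * (if f (d,k) = 2 then 1 else 0) + (if f (d,k) = 1 then 1 else 0))"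
      proof (rule sum.cong)
        fix k assume "k \<in> {..<5::nat}"
        hence "f (d,k) \<le> 2" using fle d by simp
        thus "f (d, k) = 2 * (if f (d,k) = 2 then 1 else 0) + (if f (d,k) = 1 then 1 else 0)" by auto
      qed simp
      also have "\<dots> = 2 * a d + b d" using d by (simp add: a_def b_def sum.distrib sum_distrib_left)
      finally show "(\<Sum>k<5. f (d, k)) = 2 * a d + b d" .
    qed simp
    finally show ?thesis .
  qed
  have "rvalid m a b"
    unfolding rvalid_def
  proof (intro conjI allI impI)
    fix c assume "m \<le> c" thus "a c = 0" "b c = 0" by (simp_all add: a_def b_def)
  next
    fix c assume cm: "c < m"
    define Col where "Col = (\<lambda>j. (c, j)) ` {..<(5::nat)}"
    define S where "S d k = {u \<in> Col. d < m \<and> 0 < f (d,k) \<and> DD u (d,k) \<le> f (d,k)}" for d k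
    define U where "U d = (\<Union>k\<in>{..<(5::nat)}. S d k)" for d
    have cardCol: "card Col = 5" unfolding Col_def by (subst card_image) (auto simp: inj_on_def)
    have finCol: "finite Col" unfolding Col_def by simp
    have cover: "Col \<subseteq> U c \<union> U (c+1) \<union> U (c+2) \<union> (if 1 \<le> c then U (c-1) else {}) \<union> (if 2 \<le> c then U (c-2) else {})"
    proof
      fix u assume uC: "u \<in> Col"
      then obtain j where j: "u = (c, j)" "j < 5" unfolding Col_def by auto
      have uV: "u \<in> VV m" using j cm by (simp add: VV_mem)
      then obtain v where vV: "v \<in> VV m" and h: "hears (VV m) EE f u v"
        using dom unfolding dominating_broadcast_def by blast
      obtain d k where v: "v = (d, k)" by (cases v)
      have dk: "d < m" "k < 5" using vV v by (simp_all add: VV_mem)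
      have fpos: "0 < f (d,k)" and dle: "DD u (d,k) \<le> f (d,k)"
        using h gdist_eq[OF uV vV] v by (simp_all add: hears_def)
      have "f (d,k) \<le> 2" using fle dk by simp
      hence nd: "ndist c d \<le> 2" using dle j by (simp add: DD_def)
      have uS: "u \<in> S d k" using uC dk fpos dle by (simp add: S_def)
      hence uU: "u \<in> U d" using dk unfolding U_def by blast
      have "d = c \<or> d = c + 1 \<or> d = c + 2 \<or> (1 \<le> c \<and> d = c - 1) \<or> (2 \<le> c \<and> d = c - 2)"
        using nd by (auto simp: ndist_def split: if_splits)
      thus "u \<in> U c \<union> U (c+1) \<union> U (c+2) \<union> (if 1 \<le> c then U (c-1) else {}) \<union> (if 2 \<le> c then U (c-2) else {})"
        using uU by auto
    qed
    have cardU: "card (U d) \<le> WW 2 (ndist c d) * a d + WW 1 (ndist c d) * b d" for d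
    proof -
      have "card (U d) \<le> (\<Sum>k<5. card (S d k))"
        unfolding U_def by (rule card_UN_le) simp
      also have "\<dots> \<le> (\<Sum>k<5. if d < m then WW (f (d,k)) (ndist c d) else 0)"
      proof (rule sum_mono)
        fix k assume k: "k \<in> {..<(5::nat)}"
        show "card (S d k) \<le> (if d < m then WW (f (d,k)) (ndist c d) else 0)"
        proof (cases "d < m")
          case False thus ?thesis by (simp add: S_def)
        next
          case True
          have "S d k \<subseteq> (\<lambda>j. (c, j)) ` {j. j < 5 \<and> 0 < f (d,k) \<and> ndist c d + cd j k \<le> f (d,k)}"
            by (auto simp: S_def Col_def DD_def)
          hence "card (S d k) \<le> card ((\<lambda>j. (c, j)) ` {j. j < 5 \<and> 0 < f (d,k) \<and> ndist c d + cd j k \<le> f (d,k)})"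
            by (rule card_mono[rotated]) simp
          also have "\<dots> \<le> card {j. j < 5 \<and> 0 < f (d,k) \<and> ndist c d + cd j k \<le> f (d,k)}"
            by (rule card_image_le) simp
          also have "\<dots> \<le> WW (f (d,k)) (ndist c d)"
            using card_ball[of k "f (d,k)" "ndist c d"] k fle[OF True] by simp
          finally show ?thesis using True by simp
        qed
      qed
      also have "\<dots> = WW 2 (ndist c d) * a d + WW 1 (ndist c d) * b d"
      proof (cases "d < m")
        case False thus ?thesis by (simp add: a_def b_def)
      next
        case True
        have "(\<Sum>k<5. if d < m then WW (f (d,k)) (ndist c d) else 0)
            = (\<Sum>k<5. WW 2 (ndist c d) * (if f (d,k) = 2 then 1 else 0) + WW 1 (ndist c d) * (if f (d,k) = 1 then 1 else 0))"
          using True by (intro sum.cong) (auto simp: WW_def)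
        also have "\<dots> = WW 2 (ndist c d) * a d + WW 1 (ndist c d) * b d"
          using True by (simp add: a_def b_def sum.distrib sum_distrib_left)
        finally show ?thesis .
      qed
      finally show ?thesis .
    qed
    have "5 \<le> card (U c \<union> U (c+1) \<union> U (c+2) \<union> (if 1 \<le> c then U (c-1) else {}) \<union> (if 2 \<le> c then U (c-2) else {}))"
      using card_mono[OF _ cover] cardCol by (simp add: U_def S_def finCol)
    also have "\<dots> \<le> card (U c) + card (U (c+1)) + card (U (c+2)) + card (if 1 \<le> c then U (c-1) else {}) + card (if 2 \<le> c then U (c-2) else {})"
      by (meson card_Un_le add_mono order_trans le_refl)
    also have "\<dots> \<le> KK a b c"
    proof -
      have n: "ndist c c = 0" "ndist c (c+1) = 1" "ndist c (c+2) = 2"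
        "1 \<le> c \<Longrightarrow> ndist c (c-1) = 1" "2 \<le> c \<Longrightarrow> ndist c (c-2) = 2" by (auto simp: ndist_def)
      have w: "WW 2 0 = 5" "WW 1 0 = 3" "WW 2 1 = 3" "WW 1 1 = 1" "WW 2 2 = 1" "WW 1 2 = 0"
        by (simp_all add: WW_def)
      have c0: "card (U c) \<le> 5 * a c + 3 * b c" using cardU[of c] n w by simp
      have c1: "card (U (c+1)) \<le> 3 * a (c+1) + b (c+1)" using cardU[of "c+1"] n w by simp
      have c2: "card (U (c+2)) \<le> a (c+2)" using cardU[of "c+2"] n w by simp
      have c3: "card (if 1 \<le> c then U (c-1) else {}) \<le> 3 * lo a c 1 + lo b c 1"
      proof (cases "1 \<le> c")
        case True thus ?thesis using cardU[of "c-1"] n(4)[OF True] w by (simp add: lo_def)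
      next
        case False thus ?thesis by (simp add: lo_def)
      qed
      have c4: "card (if 2 \<le> c then U (c-2) else {}) \<le> lo a c 2"
      proof (cases "2 \<le> c")
        case True thus ?thesis using cardU[of "c-2"] n(5)[OF True] w by (simp add: lo_def)
      next
        case False thus ?thesis by (simp add: lo_def)
      qed
      show ?thesis unfolding KK_def
        by (rule order_trans[OF add_mono[OF add_mono[OF add_mono[OF add_mono[OF c0 c1] c2] c3] c4]]) (simp add: algebra_simps)
    qed
    finally show "5 \<le> KK a b c" .
  qed
  hence "m \<le> (\<Sum>c<m. 2 * a c + b c)" by (rule relaxed)
  thus ?thesis using cost by simp
qed

definition rowf :: "nat \<Rightarrow> nat" where
  "rowf d = (if even (d div 2) then 0 else 2)"

definition FF :: "nat \<Rightarrow> nat \<times> nat \<Rightarrow> nat" where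
  "FF m p = (if fst p < m \<and> odd (fst p) \<and> snd p = rowf (fst p) then 2 else 0)
          + (if fst p = 0 \<and> snd p = 2 then 1 else 0)
          + (if odd m \<and> fst p = m - 1 \<and> snd p = (rowf (m - 2) + 2) mod 5 then 1 else 0)"

lemma rowf_cases: "rowf d = 0 \<or> rowf d = 2" by (simp add: rowf_def)

lemma rowf_lt: "rowf d < 5" by (simp add: rowf_def)

lemma rowf_alt:
  assumes "even c" "2 \<le> c"
  shows "(rowf (c-1) = 0 \<and> rowf (c+1) = 2) \<or> (rowf (c-1) = 2 \<and> rowf (c+1) = 0)"
proof -
  obtain t where t: "c = 2 * t" using assms(1) by blast
  have t1: "t \<ge> 1" using t assms(2) by simp
  have "(c - 1) div 2 = t - 1" using t t1 by simp
  moreover have "(c + 1) div 2 = t" using t by simp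
  moreover have "even (t - 1) \<longleftrightarrow> odd t" using t1 by simp
  ultimately show ?thesis by (auto simp: rowf_def)
qed

lemma FF_le2: "3 \<le> m \<Longrightarrow> FF m p \<le> 2"
  by (auto simp: FF_def)

lemma FF_odd:
  assumes "3 \<le> m" "d < m" "odd d"
  shows "FF m (d, rowf d) = 2"
proof -
  have "d \<noteq> 0" using assms(3) by (metis even_zero)
  moreover have "odd m \<Longrightarrow> d \<noteq> m - 1" using assms(1,3) by auto
  ultimately show ?thesis using assms by (auto simp: FF_def)
qed

lemma sum_odd2: "(\<Sum>d<m. if odd d then 2 else 0) = 2 * (m div 2 :: nat)"
proof (induction m)
  case 0 thus ?case by simp
next
  case (Suc m) thus ?case by (cases "even m") (auto elim!: evenE oddE)
qed

lemma sum_ind5: "(\<Sum>k<(5::nat). if P \<and> k = r then x else 0) = (if P \<and> r < 5 then x else (0::nat))"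
  by (cases P) (simp_all add: sum.delta)

lemma FF_cost:
  assumes m: "3 \<le> m"
  shows "broadcast_cost (VV m) (FF m) = m + 1"
proof -
  have "broadcast_cost (VV m) (FF m) = (\<Sum>d<m. \<Sum>k<5. FF m (d, k))"
    unfolding broadcast_cost_def by (rule sum_prod5)
  also have "\<dots> = (\<Sum>d<m. (if odd d then 2 else 0) + (if d = 0 then 1 else 0) + (if odd m \<and> d = m - 1 then 1 else 0))"
  proof (rule sum.cong)
    fix d assume d: "d \<in> {..<m}"
    have "(\<Sum>k<5. FF m (d, k)) = (\<Sum>k<5. (if d < m \<and> odd d \<and> k = rowf d then 2 else 0)
          + (if d = 0 \<and> k = 2 then 1 else 0)
          + (if odd m \<and> d = m - 1 \<and> k = (rowf (m - 2) + 2) mod 5 then 1 else 0))"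
      by (simp add: FF_def)
    also have "\<dots> = (if odd d then 2 else 0) + (if d = 0 then 1 else 0) + (if odd m \<and> d = m - 1 then 1 else 0)"
      using d rowf_lt[of d] by (simp only: sum.distrib sum_ind5) simp
    finally show "(\<Sum>k<5. FF m (d, k)) = (if odd d then 2 else 0) + (if d = 0 then 1 else 0) + (if odd m \<and> d = m - 1 then 1 else 0)" .
  qed simp
  also have "\<dots> = 2 * (m div 2) + 1 + (if odd m then 1 else 0)"
    using m by (simp add: sum.distrib sum_odd2 sum.delta)
  also have "\<dots> = m + 1" by presburger
  finally show ?thesis .
qed

lemma FF_dom:
  assumes m: "3 \<le> m"
  shows "dominating_broadcast (VV m) EE (FF m)"
  unfolding dominating_broadcast_def
proof
  fix u assume uV: "u \<in> VV m"
  obtain c j where u: "u = (c, j)" by (cases u)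
  have cj: "c < m" "j < 5" using uV u by (simp_all add: VV_mem)
  have key: "\<exists>v\<in>VV m. hears (VV m) EE (FF m) u v" if "v \<in> VV m" "0 < FF m v" "DD u v \<le> FF m v" for v
    using that gdist_eq[OF uV that(1)] by (auto simp: hears_def)
  show "\<exists>v\<in>VV m. hears (VV m) EE (FF m) u v"
  proof (cases "odd c")
    case True
    have "rowf c < 5" by (rule rowf_lt)
    moreover have "FF m (c, rowf c) = 2"
    proof -
      have "c \<noteq> 0" using True by (metis even_zero)
      moreover have "odd m \<Longrightarrow> c \<noteq> m - 1" using True by auto
      ultimately show ?thesis using True cj by (auto simp: FF_def)
    qed
    moreover have "cd j (rowf c) \<le> 2" using cd_le2 cj rowf_lt by blast
    ultimately show ?thesis using cj by (intro key[of "(c, rowf c)"]) (simp_all add: VV_mem u DD_def ndist_def)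
  next
    case False
    consider "c = 0" | "c \<ge> 2" "c + 1 < m" | "c \<ge> 2" "c + 1 = m"
      using False cj by fastforce
    thus ?thesis
    proof cases
      case 1
      have r1: "rowf 1 = 0" by (simp add: rowf_def)
      show ?thesis
      proof (cases "cd j 0 \<le> 1")
        case True
        have "Suc 0 \<noteq> m - Suc 0" using m by linarith
        hence "FF m (1, 0) = 2" using m r1 by (simp add: FF_def)
        thus ?thesis using True m 1 by (intro key[of "(1, 0)"]) (simp_all add: VV_mem u DD_def ndist_def)
      next
        case False
        hence "cd j 2 \<le> 1" using cd_cover02 cj by force
        moreover have "FF m (0, 2) \<ge> 1" by (simp add: FF_def)
        moreover have "FF m (0, 2) \<le> 2" using FF_le2 m by blast
        ultimately show ?thesis using 1 m by (intro key[of "(0, 2)"]) (simp_all add: VV_mem u DD_def ndist_def)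
      qed
    next
      case 2
      have o: "odd (c - 1)" "odd (c + 1)" using False 2 by simp_all
      have nd: "ndist c (c - Suc 0) = 1" "ndist c (Suc c) = 1" using 2 by (auto simp: ndist_def)
      have F1: "FF m (c - 1, rowf (c - 1)) = 2" using o 2 m by (intro FF_odd) auto
      have F2: "FF m (c + 1, rowf (c + 1)) = 2" using o 2 m by (intro FF_odd) auto
      have cov: "cd j (rowf (c-1)) \<le> 1 \<or> cd j (rowf (c+1)) \<le> 1"
        using rowf_alt[OF _ 2(1)] False cd_cover02[OF cj(2)] by auto
      thus ?thesis
      proof
        assume h: "cd j (rowf (c-1)) \<le> 1"
        show ?thesis using h F1 2 rowf_lt[of "c-1"]
          by (intro key[of "(c - 1, rowf (c - 1))"]) (simp_all add: VV_mem u DD_def nd)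
      next
        assume h: "cd j (rowf (c+1)) \<le> 1"
        show ?thesis using h F2 2 rowf_lt[of "c+1"]
          by (intro key[of "(c + 1, rowf (c + 1))"]) (simp_all add: VV_mem u DD_def nd)
      qed
    next
      case 3
      have mS: "m = Suc c" using 3 by simp
      have mo1: "odd m" unfolding mS using False by simp
      have mo: "odd m" "c = m - 1" "m - 2 = c - 1" using mo1 mS by simp_all
      have o: "odd (c - 1)" using False 3(1) by (cases c) auto
      have nd: "ndist c (c - Suc 0) = 1" "ndist c c = 0" using 3 by (auto simp: ndist_def)
      have F1: "FF m (c - 1, rowf (c - 1)) = 2" using o 3 m by (intro FF_odd) auto
      show ?thesis
      proof (cases "cd j (rowf (c-1)) \<le> 1")
        case True
        show ?thesis using True F1 3 rowf_lt[of "c-1"]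
          by (intro key[of "(c - 1, rowf (c - 1))"]) (simp_all add: VV_mem u DD_def nd)
      next
        case nc: False
        define r where "r = (rowf (c - 1) + 2) mod 5"
        have r5: "r < 5" by (simp add: r_def)
        have cr: "cd j r \<le> 1"
        proof (cases "rowf (c-1) = 0")
          case True
          hence r2: "r = 2" by (simp add: r_def)
          show ?thesis unfolding r2 using nc True cd_cover02[OF cj(2)] by simp
        next
          case False
          hence f2: "rowf (c-1) = 2" using rowf_cases[of "c-1"] by simp
          hence r4: "r = 4" by (simp add: r_def)
          show ?thesis unfolding r4 using nc f2 cd_cover24[OF cj(2)] by simp
        qed
        have "FF m (c, r) \<ge> 1" using mo by (simp add: FF_def r_def)
        moreover have "FF m (c, r) \<le> 2" using FF_le2 m by blast
        ultimately show ?thesis using cr r5 cj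
          by (intro key[of "(c, r)"]) (simp_all add: VV_mem u DD_def nd)
      qed
    qed
  qed
qed

theorem corollary4p6:
  fixes m :: nat
  assumes "m \<ge> 3"
  shows "m \<le> gamma_b2 (cprod_V (path_V m) (cycle_V 5)) (cprod_E path_E (cycle_E 5))
       \<and> gamma_b2 (cprod_V (path_V m) (cycle_V 5)) (cprod_E path_E (cycle_E 5)) \<le> m + 1"
proof -
  have tl: "two_limited_broadcast (VV m) (FF m)"
    using FF_le2 assms by (simp add: two_limited_broadcast_def)
  have P: "\<exists>f. two_limited_broadcast (VV m) f \<and> dominating_broadcast (VV m) EE f
                \<and> broadcast_cost (VV m) f = m + 1"
    using tl FF_dom[OF assms] FF_cost[OF assms] by blast
  have up: "gamma_b2 (VV m) EE \<le> m + 1"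
    unfolding gamma_b2_def by (rule Least_le) (rule P)
  have "\<exists>f. two_limited_broadcast (VV m) f \<and> dominating_broadcast (VV m) EE f
                \<and> broadcast_cost (VV m) f = gamma_b2 (VV m) EE"
    unfolding gamma_b2_def by (rule LeastI_ex) (use P in blast)
  then obtain f where f: "two_limited_broadcast (VV m) f" "dominating_broadcast (VV m) EE f"
    "broadcast_cost (VV m) f = gamma_b2 (VV m) EE" by blast
  have "m \<le> gamma_b2 (VV m) EE" using lower[OF f(1,2)] f(3) by simp
  thus ?thesis using up by simp
qed

end
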